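(* Let $\alpha,\beta,\gamma,x\in\mathbb{N}_0$ with $(\alpha,\beta,\gamma,x)\neq(0,0,0,0)$, let $\lambda$ be a nonnegative integer and $n$ a nonnegative integer. Then $$A^{\lambda,x}_{n+1}(\alpha,\beta,\gamma)=\gamma\, A^{\lambda,x}_n(\alpha,\beta,\gamma+\alpha)+x\lambda\beta\sum_{k=0}^{n}\binom{n}{k}A^{1,x}_{k}(\alpha,\beta,\gamma+\beta+\alpha)\,A^{\lambda,x}_{n-k}(\alpha,\beta,0).$$
   Context: For a number $t$ and $\alpha$, the generalised factorial is $(t|\alpha)_n=\prod_{j=0}^{n-1}(t-j\alpha)$ for $n\ge 1$ and $(t|\alpha)_0=1$. For parameters $\alpha,\beta,\gamma$, the generalised Stirling numbers $S(n,k,\alpha,\beta,\gamma)$ ($0\le k\le n$) are defined by the polynomial identity $(t|\alpha)_n=\sum_{k=0}^{n}S(n,k,\alpha,\beta,\gamma)\,(t-\gamma|\beta)_k$ in the variable $t$. For a nonnegative integer $\lambda$ put $\binom{k+\lambda-1}{k}=\lambda(\lambda+1)\cdots(\lambda+k-1)/k!$ (equal to $1$ for $k=0$). Define $$A^{\lambda,x}_n(\alpha,\beta,\gamma)=\sum_{k=0}^{n}\binom{k+\lambda-1}{k}(-1)^{n+k}\beta^k k!\,S(n,k,\alpha,-\beta,-\gamma)\,x^k .$$ *)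

theory Defs
  imports Complex_Main
begin

definition gfact :: "real \<Rightarrow> real \<Rightarrow> nat \<Rightarrow> real" where
  "gfact t a n = (\<Prod>j<n. t - real j * a)"

text \<open>The coefficient family is
  normalised to vanish for k > n so that it is uniquely determined.\<close>
definition gstirling :: "nat \<Rightarrow> nat \<Rightarrow> real \<Rightarrow> real \<Rightarrow> real \<Rightarrow> real" where
  "gstirling n k a b c =
     (THE s :: nat \<Rightarrow> real. (\<forall>j>n. s j = 0) \<and>
        (\<forall>t. gfact t a n = (\<Sum>i\<le>n. s i * gfact (t - c) b i))) k"

text \<open>A^{lam,x}_n(a,b,c); the binomial (k+lam-1 choose k) = lam(lam+1)...(lam+k-1)/k!.\<close>
definition Apoly :: "nat \<Rightarrow> real \<Rightarrow> nat \<Rightarrow> real \<Rightarrow> real \<Rightarrow> real \<Rightarrow> real" where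
  "Apoly lam x n a b c =
     (\<Sum>k\<le>n. (pochhammer (real lam) k / fact k) * (-1) ^ (n + k) * b ^ k * fact k
              * gstirling n k a (- b) (- c) * x ^ k)"

end

theory Submission
  imports Defs "HOL-Computational_Algebra.Polynomial"
begin

fun Bn :: "real \<Rightarrow> real \<Rightarrow> real \<Rightarrow> nat \<Rightarrow> nat \<Rightarrow> real" where
  "Bn a b c 0 k = (if k = 0 then 1 else 0)"
| "Bn a b c (Suc n) 0 = (c + real n * a) * Bn a b c n 0"
| "Bn a b c (Suc n) (Suc k) = real (Suc k) * b * Bn a b c n k
     + (c + real (Suc k) * b + real n * a) * Bn a b c n (Suc k)"

fun Sr :: "real \<Rightarrow> real \<Rightarrow> real \<Rightarrow> nat \<Rightarrow> nat \<Rightarrow> real" where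
  "Sr a b c 0 k = (if k = 0 then 1 else 0)"
| "Sr a b c (Suc n) 0 = - (c + real n * a) * Sr a b c n 0"
| "Sr a b c (Suc n) (Suc k) = Sr a b c n k
     - (c + real (Suc k) * b + real n * a) * Sr a b c n (Suc k)"

lemma Bn_zero: "n < k \<Longrightarrow> Bn a b c n k = 0"
  by (induction a b c n k rule: Bn.induct) auto

lemma Sr_zero: "n < k \<Longrightarrow> Sr a b c n k = 0"
  by (induction a b c n k rule: Sr.induct) auto

lemma Bn_Sr: "Bn a b c n k = (-1)^(n+k) * fact k * b^k * Sr a b c n k"
proof (induction n arbitrary: k)
  case 0 then show ?case by simp
next
  case (Suc n)
  show ?case
  proof (cases k)
    case 0 then show ?thesis using Suc by (simp add: algebra_simps)
  next
    case (Suc j)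
    have e1: "(-1::real)^(Suc n + Suc j) = (-1)^(n+j)" by simp
    have e2: "(-1::real)^(n + Suc j) = - ((-1)^(n+j))" by simp
    have e3: "(-1::real)^(Suc n + j) = - ((-1)^(n+j))" by simp
    have e4: "fact (Suc j) = (real j + 1) * (fact j :: real)" by (simp add: algebra_simps)
    show ?thesis unfolding Suc Bn.simps Sr.simps Suc.IH e1 e2 e3 e4
      by (simp add: algebra_simps)
  qed
qed

definition PP :: "real \<Rightarrow> real \<Rightarrow> nat \<Rightarrow> real poly" where
  "PP b c i = (\<Prod>j<i. [:c + real j * b, 1:])"

lemma PP_Suc: "PP b c (Suc i) = PP b c i * [:c + real i * b, 1:]"
  by (simp add: PP_def)

lemma PP_deg: "degree (PP b c i) = i \<and> lead_coeff (PP b c i) = 1"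
proof (induction i)
  case 0 then show ?case by (simp add: PP_def)
next
  case (Suc i)
  have nz: "PP b c i \<noteq> 0" using Suc by auto
  have d: "degree (PP b c i * [:c + real i * b, 1:]) = degree (PP b c i) + degree [:c + real i * b, 1:]"
    by (rule degree_mult_eq) (use nz in auto)
  have l: "lead_coeff (PP b c i * [:c + real i * b, 1:]) = lead_coeff (PP b c i) * lead_coeff [:c + real i * b, 1:]"
    by (rule lead_coeff_mult)
  have i1: "degree (PP b c i) = i" using Suc by blast
  have i2: "coeff (PP b c i) i = 1" using Suc by metis
  show ?case unfolding PP_Suc using i1 i2 d l by (simp del: mult_pCons_right)
qed

lemma PP_lead: "coeff (PP b c i) i = 1"
  using PP_deg[of b c i] by metis

lemma poly_PP: "poly (PP b c i) t = gfact (t - - c) (- b) i"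
  by (simp add: PP_def gfact_def poly_prod algebra_simps)

lemma uniq:
  assumes "\<forall>t. (\<Sum>i\<le>n. d i * poly (PP b c i) t) = 0"
  shows "\<forall>i\<le>n. d i = 0"
  using assms
proof (induction n)
  case 0 then show ?case using PP_deg[of b c 0] by (simp add: PP_def)
next
  case (Suc n)
  let ?Q = "\<Sum>i\<le>Suc n. smult (d i) (PP b c i)"
  have "\<forall>t. poly ?Q t = 0" using Suc.prems by (simp add: poly_sum)
  hence Q0: "?Q = 0" using poly_all_0_iff_0 by blast
  have "coeff ?Q (Suc n) = d (Suc n)"
  proof -
    have "coeff ?Q (Suc n) = (\<Sum>i\<le>Suc n. d i * coeff (PP b c i) (Suc n))"
      by (simp add: coeff_sum)
    also have "\<dots> = (\<Sum>i\<le>n. d i * coeff (PP b c i) (Suc n)) + d (Suc n)"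
      using PP_lead[of b c "Suc n"] by simp
    also have "(\<Sum>i\<le>n. d i * coeff (PP b c i) (Suc n)) = 0"
      by (rule sum.neutral) (auto intro!: coeff_eq_0 simp: PP_deg)
    finally show ?thesis by simp
  qed
  hence dn: "d (Suc n) = 0" using Q0 by (metis coeff_0)
  have "\<forall>t. (\<Sum>i\<le>n. d i * poly (PP b c i) t) = 0" using Suc.prems dn by simp
  then show ?case using Suc.IH dn le_Suc_eq by auto
qed

lemma Sr_ident:
  "gfact t a n = (\<Sum>i\<le>n. Sr a b c n i * gfact (t - - c) (- b) i)"
proof (induction n)
  case 0 then show ?case by (simp add: gfact_def)
next
  case (Suc n)
  let ?P = "\<lambda>i. gfact (t - - c) (- b) i"
  have PS: "?P (Suc i) = ?P i * (t + c + real i * b)" for i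
    by (simp add: gfact_def algebra_simps)
  have "gfact t a (Suc n) = gfact t a n * (t - real n * a)"
    by (simp add: gfact_def)
  also have "\<dots> = (\<Sum>i\<le>n. Sr a b c n i * (?P (Suc i) - (c + real i * b + real n * a) * ?P i))"
    unfolding Suc sum_distrib_right PS by (rule sum.cong) (auto simp: algebra_simps)
  also have "\<dots> = (\<Sum>i\<le>n. Sr a b c n i * ?P (Suc i)) - (\<Sum>i\<le>n. (c + real i * b + real n * a) * Sr a b c n i * ?P i)"
    by (simp add: sum_subtractf algebra_simps)
  also have "(\<Sum>i\<le>n. (c + real i * b + real n * a) * Sr a b c n i * ?P i)
      = (\<Sum>i\<le>Suc n. (c + real i * b + real n * a) * Sr a b c n i * ?P i)"
    by (simp add: Sr_zero)
  also have "(\<Sum>i\<le>n. Sr a b c n i * ?P (Suc i)) = 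
     (\<Sum>i\<le>Suc n. (if i = 0 then 0 else Sr a b c n (i - 1)) * ?P i)"
    by (subst sum.atMost_Suc_shift) simp
  also have "(\<Sum>i\<le>Suc n. (if i = 0 then 0 else Sr a b c n (i - 1)) * ?P i) 
      - (\<Sum>i\<le>Suc n. (c + real i * b + real n * a) * Sr a b c n i * ?P i)
      = (\<Sum>i\<le>Suc n. Sr a b c (Suc n) i * ?P i)"
    unfolding sum_subtractf[symmetric]
  proof (rule sum.cong)
    fix i assume "i \<in> {..Suc n}"
    show "(if i = 0 then 0 else Sr a b c n (i - 1)) * ?P i - (c + real i * b + real n * a) * Sr a b c n i * ?P i =
         Sr a b c (Suc n) i * ?P i"
      by (cases i) (auto simp: algebra_simps)
  qed simp
  finally show ?case .
qed

lemma gstirling_Sr: "gstirling n k a (- b) (- c) = Sr a b c n k"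
proof -
  have "(THE s :: nat \<Rightarrow> real. (\<forall>j>n. s j = 0) \<and>
        (\<forall>t. gfact t a n = (\<Sum>i\<le>n. s i * gfact (t - - c) (- b) i))) = Sr a b c n"
  proof (rule the_equality)
    show "(\<forall>j>n. Sr a b c n j = 0) \<and> (\<forall>t. gfact t a n = (\<Sum>i\<le>n. Sr a b c n i * gfact (t - - c) (- b) i))"
      using Sr_zero Sr_ident by blast
  next
    fix s assume s: "(\<forall>j>n. s j = 0) \<and> (\<forall>t. gfact t a n = (\<Sum>i\<le>n. s i * gfact (t - - c) (- b) i))"
    have "\<forall>t. (\<Sum>i\<le>n. (s i - Sr a b c n i) * poly (PP b c i) t) = 0"
      using s Sr_ident[of _ a n b c]
      by (simp add: poly_PP algebra_simps sum_subtractf)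
    from uniq[OF this] have "\<forall>i\<le>n. s i = Sr a b c n i" by simp
    then show "s = Sr a b c n" using s Sr_zero
      by (metis ext not_le)
  qed
  then show ?thesis unfolding gstirling_def by simp
qed


lemma Bn_shift: "Bn a b c (Suc n) k = (c + real k * b) * Bn a b (c + a) n k
    + real k * b * Bn a b (c + a) n (k - 1)"
proof (induction n arbitrary: c k)
  case 0 then show ?case by (cases k) auto
next
  case (Suc n)
  show ?case
  proof (cases k)
    case 0
    then show ?thesis using Suc.IH[of c 0] by (simp add: algebra_simps)
  next
    case (Suc j)
    note IH = Suc.IH
    have L: "Bn a b c (Suc (Suc n)) (Suc j) = real (Suc j) * b * Bn a b c (Suc n) j
       + (c + real (Suc j) * b + real (Suc n) * a) * Bn a b c (Suc n) (Suc j)" by simp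
    show ?thesis unfolding \<open>k = Suc j\<close> L IH[of c j] IH[of c "Suc j"]
      by (cases j) (simp_all add: algebra_simps)
  qed
qed

lemma Bn_b: "Bn a b (c + b) n k = Bn a b c n (Suc k) + Bn a b c n k"
proof (induction n arbitrary: c k)
  case 0 then show ?case by simp
next
  case (Suc n)
  have e: "c + b + a = (c + a) + b" by simp
  show ?case
  proof (cases k)
    case 0
    show ?thesis unfolding Bn_shift[of a b _ n] 0 e Suc.IH[of "c+a"]
      by (simp add: algebra_simps)
  next
    case (Suc j)
    show ?thesis unfolding Bn_shift[of a b _ n] Suc e Suc.IH[of "c+a"]
      by (simp add: algebra_simps)
  qed
qed

lemma leibniz:
  fixes f g :: "nat \<Rightarrow> real"
  shows "(\<Sum>m\<le>Suc n. real (Suc n choose m) * f m * g (Suc n - m)) =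
    (\<Sum>m\<le>n. real (n choose m) * f (Suc m) * g (n - m)) +
    (\<Sum>m\<le>n. real (n choose m) * f m * g (Suc n - m))"
proof -
  have "(\<Sum>m\<le>Suc n. real (Suc n choose m) * f m * g (Suc n - m)) =
     f 0 * g (Suc n) + (\<Sum>m\<le>n. real (Suc n choose Suc m) * f (Suc m) * g (n - m))"
    by (subst sum.atMost_Suc_shift) simp
  also have "(\<Sum>m\<le>n. real (Suc n choose Suc m) * f (Suc m) * g (n - m)) =
     (\<Sum>m\<le>n. real (n choose m) * f (Suc m) * g (n - m)) +
     (\<Sum>m\<le>n. real (n choose Suc m) * f (Suc m) * g (n - m))"
    by (simp add: sum.distrib algebra_simps)
  also have "f 0 * g (Suc n) + ((\<Sum>m\<le>n. real (n choose m) * f (Suc m) * g (n - m)) +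
     (\<Sum>m\<le>n. real (n choose Suc m) * f (Suc m) * g (n - m))) =
     (\<Sum>m\<le>n. real (n choose m) * f (Suc m) * g (n - m)) +
     (\<Sum>m\<le>Suc n. real (n choose m) * f m * g (Suc n - m))"
  proof -
    have "(\<Sum>m\<le>Suc n. real (n choose m) * f m * g (Suc n - m)) = f 0 * g (Suc n) + (\<Sum>m\<le>n. real (n choose Suc m) * f (Suc m) * g (n - m))"
      by (subst sum.atMost_Suc_shift) simp
    then show ?thesis by simp
  qed
  also have "(\<Sum>m\<le>Suc n. real (n choose m) * f m * g (Suc n - m)) =
     (\<Sum>m\<le>n. real (n choose m) * f m * g (Suc n - m))" by simp
  finally show ?thesis .
qed

lemma Bn_conv: "(\<Sum>m\<le>n. real (n choose m) * Bn a b c m k * Bn a b d (n - m) l)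
   = Bn a b (c + d) n (k + l)"
proof (induction n arbitrary: c d k l)
  case 0 then show ?case by simp
next
  case (Suc n)
  have s1: "(\<Sum>m\<le>n. real (n choose m) * Bn a b c (Suc m) k * Bn a b d (n - m) l)
     = (c + real k * b) * Bn a b (c + d + a) n (k + l) + real k * b * Bn a b (c + d + a) n (k - 1 + l)"
  proof -
    have "(\<Sum>m\<le>n. real (n choose m) * Bn a b c (Suc m) k * Bn a b d (n - m) l)
      = (c + real k * b) * (\<Sum>m\<le>n. real (n choose m) * Bn a b (c+a) m k * Bn a b d (n - m) l)
        + real k * b * (\<Sum>m\<le>n. real (n choose m) * Bn a b (c+a) m (k - 1) * Bn a b d (n - m) l)"
      unfolding Bn_shift sum_distrib_left sum.distrib[symmetric]
      by (rule sum.cong) (auto simp: algebra_simps)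
    then show ?thesis unfolding Suc.IH by (simp add: algebra_simps)
  qed
  have s2: "(\<Sum>m\<le>n. real (n choose m) * Bn a b c m k * Bn a b d (Suc n - m) l)
     = (d + real l * b) * Bn a b (c + d + a) n (k + l) + real l * b * Bn a b (c + d + a) n (k + (l - 1))"
  proof -
    have "(\<Sum>m\<le>n. real (n choose m) * Bn a b c m k * Bn a b d (Suc n - m) l)
      = (d + real l * b) * (\<Sum>m\<le>n. real (n choose m) * Bn a b c m k * Bn a b (d+a) (n - m) l)
        + real l * b * (\<Sum>m\<le>n. real (n choose m) * Bn a b c m k * Bn a b (d+a) (n - m) (l - 1))"
      unfolding sum_distrib_left sum.distrib[symmetric]
      by (rule sum.cong) (auto simp: algebra_simps Suc_diff_le Bn_shift)
    then show ?thesis unfolding Suc.IH by (simp add: algebra_simps)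
  qed
  have LL: "(\<Sum>m\<le>Suc n. real (Suc n choose m) * Bn a b c m k * Bn a b d (Suc n - m) l)
    = (\<Sum>m\<le>n. real (n choose m) * Bn a b c (Suc m) k * Bn a b d (n - m) l)
      + (\<Sum>m\<le>n. real (n choose m) * Bn a b c m k * Bn a b d (Suc n - m) l)"
    using leibniz[where f="\<lambda>m. Bn a b c m k" and g="\<lambda>m. Bn a b d m l" and n=n] by simp
  show ?case unfolding LL s1 s2 Bn_shift[of a b "c+d" n]
    by (cases "k = 0"; cases "l = 0") (auto simp: algebra_simps)
qed


lemma shift_sum:
  fixes f :: "nat \<Rightarrow> real"
  assumes f0: "\<And>m. n < m \<Longrightarrow> f m = 0" and q: "q \<le> n"
  shows "(\<Sum>p\<le>n. f (p + q)) = (\<Sum>m\<le>n. if q \<le> m then f m else 0)"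
proof -
  have "(\<Sum>p\<le>n. f (p + q)) = (\<Sum>p\<in>{0..n - q}. f (p + q))"
    by (rule sum.mono_neutral_right) (auto simp: f0)
  also have "\<dots> = (\<Sum>m\<in>{0 + q..n - q + q}. f m)"
    by (rule sum.shift_bounds_cl_nat_ivl[symmetric])
  also have "{0 + q..n - q + q} = {m\<in>{..n}. q \<le> m}" using q by auto
  also have "(\<Sum>m\<in>{m\<in>{..n}. q \<le> m}. f m) = (\<Sum>m\<le>n. if q \<le> m then f m else 0)"
    by (rule sum.inter_filter) simp
  finally show ?thesis .
qed

lemma reindex2:
  fixes f g :: "nat \<Rightarrow> real"
  assumes f0: "\<And>m. n < m \<Longrightarrow> f m = 0"
  shows "(\<Sum>p\<le>n. \<Sum>q\<le>n. g q * f (p + q)) = (\<Sum>m\<le>n. f m * (\<Sum>q\<le>m. g q))"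
proof -
  have "(\<Sum>p\<le>n. \<Sum>q\<le>n. g q * f (p + q)) = (\<Sum>q\<le>n. g q * (\<Sum>p\<le>n. f (p + q)))"
    by (subst sum.swap) (simp add: sum_distrib_left)
  also have "\<dots> = (\<Sum>q\<le>n. g q * (\<Sum>m\<le>n. if q \<le> m then f m else 0))"
    by (rule sum.cong[OF refl], subst shift_sum[OF f0]) auto
  also have "\<dots> = (\<Sum>m\<le>n. f m * (\<Sum>q\<le>n. if q \<le> m then g q else 0))"
  proof -
    have "(\<Sum>q\<le>n. g q * (\<Sum>m\<le>n. if q \<le> m then f m else 0)) = (\<Sum>q\<le>n. \<Sum>m\<le>n. if q \<le> m then g q * f m else 0)"
      by (simp add: sum_distrib_left if_distrib cong: if_cong)
    also have "\<dots> = (\<Sum>m\<le>n. \<Sum>q\<le>n. if q \<le> m then g q * f m else 0)"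
      by (rule sum.swap)
    also have "\<dots> = (\<Sum>m\<le>n. f m * (\<Sum>q\<le>n. if q \<le> m then g q else 0))"
      by (auto simp: sum_distrib_left intro!: sum.cong)
    finally show ?thesis .
  qed
  also have "\<dots> = (\<Sum>m\<le>n. f m * (\<Sum>q\<le>m. g q))"
  proof (rule sum.cong)
    fix m assume "m \<in> {..n}"
    then have "{q\<in>{..n}. q \<le> m} = {..m}" by auto
    then have "(\<Sum>q\<le>n. if q \<le> m then g q else 0) = (\<Sum>q\<le>m. g q)"
      using sum.inter_filter[of "{..n}" g "\<lambda>q. q \<le> m"] by simp
    then show "f m * (\<Sum>q\<le>n. if q \<le> m then g q else 0) = f m * (\<Sum>q\<le>m. g q)" by simp
  qed simp
  finally show ?thesis .
qed

definition cc :: "nat \<Rightarrow> nat \<Rightarrow> real" where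
  "cc lam k = pochhammer (real lam) k / fact k"

lemma cc_Suc: "real (Suc k) * cc lam (Suc k) = (real lam + real k) * cc lam k"
  proof -
  have "fact (Suc k) = real (Suc k) * (fact k :: real)" by simp
  then show ?thesis unfolding cc_def pochhammer_Suc
    by (simp del: of_nat_Suc fact_Suc)
qed

lemma cc_sum: "real lam * (\<Sum>q\<le>m. cc lam q) = real (Suc m) * cc lam (Suc m)"
proof (induction m)
  case 0 then show ?case using cc_Suc[of 0 lam] by (simp add: cc_def)
next
  case (Suc m)
  have "real lam * (\<Sum>q\<le>Suc m. cc lam q) = real (Suc m) * cc lam (Suc m) + real lam * cc lam (Suc m)"
    using Suc by (simp add: algebra_simps)
  also have "\<dots> = real (Suc (Suc m)) * cc lam (Suc (Suc m))"
    using cc_Suc[of "Suc m" lam] by (simp add: algebra_simps)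
  finally show ?case .
qed

lemma cc_1: "cc 1 k = 1"
  by (simp add: cc_def pochhammer_fact[symmetric])

lemma cc_1': "cc (Suc 0) k = 1"
  using cc_1 by simp

lemma Apoly_Bn: "Apoly lam x n a b c = (\<Sum>k\<le>n. cc lam k * x ^ k * Bn a b c n k)"
  unfolding Apoly_def gstirling_Sr Bn_Sr cc_def
  by (rule sum.cong) (auto simp: algebra_simps)

lemma Apoly_ext: "n \<le> N \<Longrightarrow> Apoly lam x n a b c = (\<Sum>k\<le>N. cc lam k * x ^ k * Bn a b c n k)"
  unfolding Apoly_Bn
  by (rule sum.mono_neutral_left) (auto simp: Bn_zero)


lemma conv_A:
  "(\<Sum>k\<le>n. real (n choose k) * Apoly 1 x k a b d * Apoly lam x (n - k) a b 0)
   = (\<Sum>m\<le>n. (x ^ m * Bn a b d n m) * (\<Sum>q\<le>m. cc lam q))"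
proof -
  have "(\<Sum>k\<le>n. real (n choose k) * Apoly 1 x k a b d * Apoly lam x (n - k) a b 0)
     = (\<Sum>k\<le>n. real (n choose k) * (\<Sum>p\<le>n. x ^ p * Bn a b d k p) * (\<Sum>q\<le>n. cc lam q * x ^ q * Bn a b 0 (n - k) q))"
    by (rule sum.cong[OF refl]) (simp add: Apoly_ext[of _ n] cc_1 cc_1')
  also have "\<dots> = (\<Sum>k\<le>n. \<Sum>p\<le>n. \<Sum>q\<le>n. real (n choose k) * (x ^ p * Bn a b d k p) * (cc lam q * x ^ q * Bn a b 0 (n - k) q))"
  proof (rule sum.cong[OF refl])
    fix k
    let ?X = "\<lambda>p. x ^ p * Bn a b d k p" and ?Y = "\<lambda>q. cc lam q * x ^ q * Bn a b 0 (n - k) q"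
    have "real (n choose k) * sum ?X {..n} * sum ?Y {..n} = real (n choose k) * (sum ?X {..n} * sum ?Y {..n})"
      by (simp only: mult.assoc)
    also have "sum ?X {..n} * sum ?Y {..n} = (\<Sum>p\<le>n. \<Sum>q\<le>n. ?X p * ?Y q)"
      by (rule sum_product)
    also have "real (n choose k) * \<dots> = (\<Sum>p\<le>n. \<Sum>q\<le>n. real (n choose k) * (?X p * ?Y q))"
      by (simp only: sum_distrib_left)
    finally show "real (n choose k) * sum ?X {..n} * sum ?Y {..n} = (\<Sum>p\<le>n. \<Sum>q\<le>n. real (n choose k) * ?X p * ?Y q)"
      by (simp only: mult.assoc)
  qed
  also have "\<dots> = (\<Sum>p\<le>n. \<Sum>k\<le>n. \<Sum>q\<le>n. real (n choose k) * (x ^ p * Bn a b d k p) * (cc lam q * x ^ q * Bn a b 0 (n - k) q))"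
    by (rule sum.swap)
  also have "\<dots> = (\<Sum>p\<le>n. \<Sum>q\<le>n. \<Sum>k\<le>n. real (n choose k) * (x ^ p * Bn a b d k p) * (cc lam q * x ^ q * Bn a b 0 (n - k) q))"
    by (rule sum.cong[OF refl], rule sum.swap)
  also have "\<dots> = (\<Sum>p\<le>n. \<Sum>q\<le>n. cc lam q * (x ^ (p + q) * (\<Sum>k\<le>n. real (n choose k) * Bn a b d k p * Bn a b 0 (n - k) q)))"
    by (rule sum.cong[OF refl], rule sum.cong[OF refl]) (simp add: sum_distrib_left power_add algebra_simps)
  also have "\<dots> = (\<Sum>p\<le>n. \<Sum>q\<le>n. cc lam q * (x ^ (p + q) * Bn a b d n (p + q)))"
    using Bn_conv[of n a b d _ 0] by simp
  also have "\<dots> = (\<Sum>m\<le>n. (x ^ m * Bn a b d n m) * (\<Sum>q\<le>m. cc lam q))"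
    by (rule reindex2[where f="\<lambda>m. x ^ m * Bn a b d n m" and g="cc lam"]) (simp add: Bn_zero)
  finally show ?thesis .
qed

lemma main:
  "Apoly lam x (Suc n) a b c = c * Apoly lam x n a b (c + a)
     + x * real lam * b * (\<Sum>k\<le>n. real (n choose k) * Apoly 1 x k a b (c + b + a) * Apoly lam x (n - k) a b 0)"
proof -
  define d where "d = c + b + a"
  have dd: "c + a + b = d" unfolding d_def by simp
  have "Apoly lam x (Suc n) a b c = (\<Sum>k\<le>Suc n. cc lam k * x ^ k * Bn a b c (Suc n) k)"
    by (rule Apoly_Bn)
  also have "\<dots> = c * (\<Sum>k\<le>Suc n. cc lam k * x ^ k * Bn a b (c + a) n k)
     + b * (\<Sum>k\<le>Suc n. real k * cc lam k * x ^ k * (Bn a b (c + a) n k + Bn a b (c + a) n (k - 1)))"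
    unfolding Bn_shift sum_distrib_left sum.distrib[symmetric]
    by (rule sum.cong[OF refl]) (simp add: algebra_simps)
  also have "(\<Sum>k\<le>Suc n. cc lam k * x ^ k * Bn a b (c + a) n k) = Apoly lam x n a b (c + a)"
    by (simp add: Apoly_ext[of n "Suc n"])
  also have "(\<Sum>k\<le>Suc n. real k * cc lam k * x ^ k * (Bn a b (c + a) n k + Bn a b (c + a) n (k - 1)))
     = (\<Sum>m\<le>n. real (Suc m) * cc lam (Suc m) * x ^ Suc m * Bn a b d n m)"
  proof -
    have e: "Bn a b (c + a) n (Suc i) + Bn a b (c + a) n i = Bn a b d n i" for i
      using Bn_b[of a b "c+a" n i] dd by simp
    show ?thesis by (subst sum.atMost_Suc_shift) (simp add: e)
  qed
  also have "(\<Sum>m\<le>n. real (Suc m) * cc lam (Suc m) * x ^ Suc m * Bn a b d n m)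
     = x * real lam * (\<Sum>k\<le>n. real (n choose k) * Apoly 1 x k a b d * Apoly lam x (n - k) a b 0)"
  proof -
    have "(\<Sum>m\<le>n. real (Suc m) * cc lam (Suc m) * x ^ Suc m * Bn a b d n m)
      = (\<Sum>m\<le>n. x * real lam * ((x ^ m * Bn a b d n m) * (\<Sum>q\<le>m. cc lam q)))"
    proof (rule sum.cong[OF refl])
      fix m
      have "real (Suc m) * cc lam (Suc m) * x ^ Suc m * Bn a b d n m
          = (real lam * (\<Sum>q\<le>m. cc lam q)) * (x * x ^ m * Bn a b d n m)"
        unfolding cc_sum by (simp add: algebra_simps)
      also have "\<dots> = x * real lam * ((x ^ m * Bn a b d n m) * (\<Sum>q\<le>m. cc lam q))"
        by (simp add: algebra_simps)
      finally show "real (Suc m) * cc lam (Suc m) * x ^ Suc m * Bn a b d n m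
          = x * real lam * ((x ^ m * Bn a b d n m) * (\<Sum>q\<le>m. cc lam q))" .
    qed
    also have "\<dots> = x * real lam * (\<Sum>m\<le>n. (x ^ m * Bn a b d n m) * (\<Sum>q\<le>m. cc lam q))"
      by (rule sum_distrib_left[symmetric])
    finally show ?thesis unfolding conv_A .
  qed
  finally show ?thesis unfolding d_def by (simp add: algebra_simps)
qed

theorem theorem4:
  fixes \<alpha> \<beta> \<gamma> x lam n :: nat
  assumes "(\<alpha>, \<beta>, \<gamma>, x) \<noteq> (0, 0, 0, 0)"
  shows "Apoly lam (real x) (Suc n) (real \<alpha>) (real \<beta>) (real \<gamma>) =
           real \<gamma> * Apoly lam (real x) n (real \<alpha>) (real \<beta>) (real \<gamma> + real \<alpha>)
         + real x * real lam * real \<beta> *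
           (\<Sum>k\<le>n. real (n choose k)
                 * Apoly 1 (real x) k (real \<alpha>) (real \<beta>) (real \<gamma> + real \<beta> + real \<alpha>)
                 * Apoly lam (real x) (n - k) (real \<alpha>) (real \<beta>) 0)"
  by (rule main)

end
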